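(* Consider $M$ access points (APs), each with $N$ antennas and $L\le N$ RF chains, and $K$ single-antenna users (UEs) with transmit powers $p_1,\dots,p_K>0$ and noise power $\sigma^2>0$. For each AP $m$ let $\mathcal{U}_m\subseteq\{1,\dots,K\}$ be the set of UEs it serves, and for each UE $k$ let $\mathcal{F}_k=\{m: k\in\mathcal{U}_m\}$. Let $\boldsymbol{h}_{m,i}\in\mathbb{C}^{N}$ be (perfectly known) channel vectors and $\boldsymbol{R}_{m,i}\in\mathbb{C}^{N\times N}$ Hermitian positive semidefinite matrices. For analog beamformers $\boldsymbol{W}=(\boldsymbol{W}_1,\dots,\boldsymbol{W}_M)$ with $\boldsymbol{W}_m\in\mathbb{C}^{N\times L}$ of full column rank, define the perfect-CSI uplink MMSE SINR of UE $k$ by $$\mathrm{SINR}_k(\boldsymbol{W})=\boldsymbol{g}_k^{*}\Big(\sum_{i\neq k}\bar{\boldsymbol{g}}_{k,i}\bar{\boldsymbol{g}}_{k,i}^{*}p_i+\boldsymbol{\Sigma}_k\Big)^{-1}\boldsymbol{g}_k,$$ where $\boldsymbol{g}_{m,i}=\boldsymbol{W}_m^{*}\boldsymbol{h}_{m,i}$, $\boldsymbol{g}_k\in\mathbb{C}^{|\mathcal{F}_k|L}$ stacks $\boldsymbol{g}_{m,k}$ over $m\in\mathcal{F}_k$, $\bar{\boldsymbol{g}}_{k,i}$ stacks $\mathbb{1}[i\in\mathcal{U}_m]\,\boldsymbol{g}_{m,i}$ over $m\in\mathcal{F}_k$, and $\boldsymbol{\Sigma}_k$ is block diagonal with blocks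 $\boldsymbol{\Sigma}_{k,m}=\sum_{i\notin\mathcal{U}_m}\boldsymbol{W}_m^{*}\boldsymbol{R}_{m,i}\boldsymbol{W}_m\,p_i+\sigma^2\boldsymbol{W}_m^{*}\boldsymbol{W}_m$, $m\in\mathcal{F}_k$. Suppose $\boldsymbol{W}_m=\boldsymbol{U}_m\boldsymbol{Q}_m$ with $\boldsymbol{U}_m\in\mathbb{C}^{N\times L}$ satisfying $\boldsymbol{U}_m^{*}\boldsymbol{U}_m=\boldsymbol{I}_L$. Then, for fixed $\boldsymbol{U}_1,\dots,\boldsymbol{U}_M$, every choice of nonsingular $\boldsymbol{Q}_m\in\mathbb{C}^{L\times L}$, $m=1,\dots,M$, yields the same value of $\mathrm{SINR}_k(\boldsymbol{W})$ (namely $\mathrm{SINR}_k(\boldsymbol{U})$), so any nonsingular $\boldsymbol{Q}=\mathrm{diag}(\boldsymbol{Q}_1,\dots,\boldsymbol{Q}_M)$ provides the maximum SINR.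
   Context: Hybrid analog-digital cell-free massive MIMO uplink. The unit-modulus constraint on the analog beamformer entries is disregarded here. "Perfect CSI" means the channel estimates equal the true channels, so the estimation error covariance is zero; the factorization $\boldsymbol{W}=\boldsymbol{U}\boldsymbol{Q}$ (with $\boldsymbol{U}=\mathrm{diag}(\boldsymbol{U}_m)$ semi-unitary, $\boldsymbol{Q}=\mathrm{diag}(\boldsymbol{Q}_m)$) arises from an SVD of $\boldsymbol{W}$. *)

theory Defs
  imports "HOL-Analysis.Analysis" "Jordan_Normal_Form.Gauss_Jordan_Elimination"
begin

text \<open>Index conventions: APs are 0..M-1, UEs are 0..K-1 (0-based).
  Matrices/vectors are Jordan_Normal_Form matrices over complex.\<close>

definition ctrans :: "complex mat \<Rightarrow> complex mat" where
  "ctrans A = mat (dim_col A) (dim_row A) (\<lambda>(i,j). cnj (A $$ (j,i)))"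

definition outer :: "complex vec \<Rightarrow> complex mat" where
  "outer v = mat (dim_vec v) (dim_vec v) (\<lambda>(i,j). v $ i * cnj (v $ j))"

definition minv :: "complex mat \<Rightarrow> complex mat" where
  "minv A = (case mat_inverse A of Some B \<Rightarrow> B | None \<Rightarrow> 0\<^sub>m (dim_row A) (dim_col A))"

definition msum :: "nat \<Rightarrow> nat \<Rightarrow> (nat \<Rightarrow> complex mat) \<Rightarrow> nat set \<Rightarrow> complex mat" where
  "msum r c f I = mat r c (\<lambda>ij. \<Sum>i\<in>I. f i $$ ij)"

definition herm_psd :: "nat \<Rightarrow> complex mat \<Rightarrow> bool" where
  "herm_psd n A \<longleftrightarrow> A \<in> carrier_mat n n \<and> ctrans A = A \<and>
     (\<forall>v \<in> carrier_vec n. 0 \<le> Re (conjugate v \<bullet> (A *\<^sub>v v)))"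

definition full_col_rank :: "complex mat \<Rightarrow> bool" where
  "full_col_rank A \<longleftrightarrow> (\<forall>v \<in> carrier_vec (dim_col A). A *\<^sub>v v = 0\<^sub>v (dim_row A) \<longrightarrow> v = 0\<^sub>v (dim_col A))"

definition serving :: "nat \<Rightarrow> (nat \<Rightarrow> nat set) \<Rightarrow> nat \<Rightarrow> nat list" where
  "serving M Us k = sorted_list_of_set {m. m < M \<and> k \<in> Us m}"

definition geff :: "(nat \<Rightarrow> complex mat) \<Rightarrow> (nat \<Rightarrow> nat \<Rightarrow> complex vec) \<Rightarrow> nat \<Rightarrow> nat \<Rightarrow> complex vec" where
  "geff W h m i = ctrans (W m) *\<^sub>v h m i"

definition gstack :: "nat \<Rightarrow> nat \<Rightarrow> (nat \<Rightarrow> nat set) \<Rightarrow> (nat \<Rightarrow> complex mat) \<Rightarrow> (nat \<Rightarrow> nat \<Rightarrow> complex vec) \<Rightarrow> nat \<Rightarrow> complex vec" where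
  "gstack M L Us W h k = (let fs = serving M Us k in
     vec (length fs * L) (\<lambda>j. geff W h (fs ! (j div L)) k $ (j mod L)))"

definition gbar :: "nat \<Rightarrow> nat \<Rightarrow> (nat \<Rightarrow> nat set) \<Rightarrow> (nat \<Rightarrow> complex mat) \<Rightarrow> (nat \<Rightarrow> nat \<Rightarrow> complex vec) \<Rightarrow> nat \<Rightarrow> nat \<Rightarrow> complex vec" where
  "gbar M L Us W h k i = (let fs = serving M Us k in
     vec (length fs * L) (\<lambda>j. if i \<in> Us (fs ! (j div L)) then geff W h (fs ! (j div L)) i $ (j mod L) else 0))"

definition sigblk :: "nat \<Rightarrow> nat \<Rightarrow> (nat \<Rightarrow> nat set) \<Rightarrow> (nat \<Rightarrow> complex mat) \<Rightarrow> (nat \<Rightarrow> nat \<Rightarrow> complex mat) \<Rightarrow> (nat \<Rightarrow> real) \<Rightarrow> real \<Rightarrow> nat \<Rightarrow> complex mat" where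
  "sigblk K L Us W R p \<sigma>2 m =
     msum (dim_col (W m)) (dim_col (W m)) (\<lambda>i. complex_of_real (p i) \<cdot>\<^sub>m (ctrans (W m) * R m i * W m)) {i. i < K \<and> i \<notin> Us m}
     + complex_of_real \<sigma>2 \<cdot>\<^sub>m (ctrans (W m) * W m)"

definition sigma_k :: "nat \<Rightarrow> nat \<Rightarrow> nat \<Rightarrow> (nat \<Rightarrow> nat set) \<Rightarrow> (nat \<Rightarrow> complex mat) \<Rightarrow> (nat \<Rightarrow> nat \<Rightarrow> complex mat) \<Rightarrow> (nat \<Rightarrow> real) \<Rightarrow> real \<Rightarrow> nat \<Rightarrow> complex mat" where
  "sigma_k M K L Us W R p \<sigma>2 k = (let fs = serving M Us k in
     mat (length fs * L) (length fs * L) (\<lambda>(a,b).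
       if a div L = b div L then sigblk K L Us W R p \<sigma>2 (fs ! (a div L)) $$ (a mod L, b mod L) else 0))"

definition SINR :: "nat \<Rightarrow> nat \<Rightarrow> nat \<Rightarrow> (nat \<Rightarrow> nat set) \<Rightarrow> (nat \<Rightarrow> nat \<Rightarrow> complex vec) \<Rightarrow> (nat \<Rightarrow> nat \<Rightarrow> complex mat) \<Rightarrow> (nat \<Rightarrow> real) \<Rightarrow> real \<Rightarrow> (nat \<Rightarrow> complex mat) \<Rightarrow> nat \<Rightarrow> complex" where
  "SINR M K L Us h R p \<sigma>2 W k = (let
     g = gstack M L Us W h k;
     n = dim_vec g;
     C = msum n n (\<lambda>i. complex_of_real (p i) \<cdot>\<^sub>m outer (gbar M L Us W h k i)) {i. i < K \<and> i \<noteq> k}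
         + sigma_k M K L Us W R p \<sigma>2 k
   in conjugate g \<bullet> (minv C *\<^sub>v g))"

end

theory Submission
  imports Defs
begin


lemma ctrans_dims[simp]: "dim_row (ctrans A) = dim_col A" "dim_col (ctrans A) = dim_row A"
  by (auto simp: ctrans_def)

lemma ctrans_carrier[simp,intro]: "A \<in> carrier_mat r c \<Longrightarrow> ctrans A \<in> carrier_mat c r"
  by (auto simp: ctrans_def)

lemma ctrans_index[simp]: "i < dim_col A \<Longrightarrow> j < dim_row A \<Longrightarrow> ctrans A $$ (i,j) = cnj (A $$ (j,i))"
  by (auto simp: ctrans_def)

lemma ctrans_ctrans[simp]: "ctrans (ctrans A) = A"
  by (rule eq_matI) auto

lemma ctrans_one[simp]: "ctrans (1\<^sub>m n) = 1\<^sub>m n"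
  by (rule eq_matI) auto

lemma ctrans_mult: assumes "dim_col A = dim_row B"
  shows "ctrans (A * B) = ctrans B * ctrans A"
proof (rule eq_matI)
  fix i j assume ij: "i < dim_row (ctrans B * ctrans A)" "j < dim_col (ctrans B * ctrans A)"
  then show "ctrans (A * B) $$ (i, j) = (ctrans B * ctrans A) $$ (i, j)"
    using assms by (auto simp: scalar_prod_def ctrans_def intro!: sum.cong)
qed auto

definition blkdiag :: "nat list \<Rightarrow> nat \<Rightarrow> (nat \<Rightarrow> complex mat) \<Rightarrow> complex mat" where
 "blkdiag fs L B = mat (length fs * L) (length fs * L) (\<lambda>(a,b). if a div L = b div L then B (fs ! (a div L)) $$ (a mod L, b mod L) else 0)"

definition stack :: "nat list \<Rightarrow> nat \<Rightarrow> (nat \<Rightarrow> complex vec) \<Rightarrow> complex vec" where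
 "stack fs L v = vec (length fs * L) (\<lambda>j. v (fs ! (j div L)) $ (j mod L))"

lemma blockset: fixes L n q :: nat assumes "q<n" shows "{c \<in> {0..<n*L}. c div L = q} = (\<lambda>t. q*L+t) ` {..<L}"
proof (rule subset_antisym; rule subsetI)
    fix c assume c: "c \<in> {c\<in>{0..<n*L}. c div L = q}"
    then have L: "L > 0" by (cases "L = 0") auto
    have "c = q*L + c mod L" using c by (metis (mono_tags, lifting) div_mult_mod_eq mem_Collect_eq)
    moreover have "c mod L < L" using L by simp
    ultimately show "c \<in> (\<lambda>t. q*L+t) ` {..<L}" by blast
  next
    fix c assume "c \<in> (\<lambda>t. q*L+t) ` {..<L}"
    then obtain t where t: "t < L" "c = q*L+t" by auto
    have "q*L + t < (q+1)*L" using t by simp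
    also have "\<dots> \<le> n*L" using assms by (intro mult_right_mono) auto
    finally show "c \<in> {c\<in>{0..<n*L}. c div L = q}" using t by auto
qed

lemma sum_block: fixes q n L :: nat and f :: "nat \<Rightarrow> complex" assumes "q < n"
  shows "(\<Sum>c\<in>{0..<n*L}. if c div L = q then f c else 0) = (\<Sum>t<L. f (q*L+t))"
proof -
  have "(\<Sum>c\<in>{0..<n*L}. if c div L = q then f c else 0) = (\<Sum>c\<in>{c\<in>{0..<n*L}. c div L = q}. f c)"
    by (rule sum.inter_filter[symmetric]) simp
  also have "{c\<in>{0..<n*L}. c div L = q} = (\<lambda>t. q*L+t) ` {..<L}" by (rule blockset[OF assms])
  also have "(\<Sum>c\<in>(\<lambda>t. q*L+t) ` {..<L}. f c) = (\<Sum>t<L. f (q*L+t))"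
    by (rule sum.reindex_cong[where l="\<lambda>t. q*L+t"]) (auto simp: inj_on_def)
  finally show ?thesis .
qed

lemma blkdiag_carrier[simp]: "blkdiag fs L B \<in> carrier_mat (length fs * L) (length fs * L)"
  and blkdiag_dims[simp]: "dim_row (blkdiag fs L B) = length fs * L" "dim_col (blkdiag fs L B) = length fs * L"
  by (auto simp: blkdiag_def)

lemma stack_carrier[simp]: "stack fs L v \<in> carrier_vec (length fs * L)"
  and stack_dim[simp]: "dim_vec (stack fs L v) = length fs * L"
  by (auto simp: stack_def)

lemma blk_idx: fixes a n L :: nat assumes "a < n * L" shows "L > 0" "a div L < n" "a mod L < L"
proof -
  show L: "L > 0" using assms by (cases L) auto
  show "a div L < n" using assms by (simp add: L div_less_iff_less_mult mult.commute)
  show "a mod L < L" using L by simp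
qed

lemma blkdiag_cong: assumes "(\<And>m. m \<in> set fs \<Longrightarrow> A m = B m)" shows "blkdiag fs L A = blkdiag fs L B"
proof (intro eq_matI)
  fix i j assume "i < dim_row (blkdiag fs L B)" "j < dim_col (blkdiag fs L B)"
  then have "i < length fs * L" by simp
  then have "fs ! (i div L) \<in> set fs" using blk_idx(2)[OF \<open>i < length fs * L\<close>] by simp
  then show "blkdiag fs L A $$ (i, j) = blkdiag fs L B $$ (i, j)"
    using assms \<open>i < length fs * L\<close> \<open>j < dim_col (blkdiag fs L B)\<close> by (auto simp add: blkdiag_def)
qed simp_all

lemma stack_cong: assumes "(\<And>m. m \<in> set fs \<Longrightarrow> A m = B m)" shows "stack fs L A = stack fs L B"
  unfolding stack_def
proof (intro eq_vecI)
  fix i assume "i < dim_vec (vec (length fs * L) (\<lambda>j. B (fs ! (j div L)) $ (j mod L)))"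
  then have "i < length fs * L" by simp
  then have "fs ! (i div L) \<in> set fs" using blk_idx(2)[OF \<open>i < length fs * L\<close>] by simp
  then show "vec (length fs * L) (\<lambda>j. A (fs ! (j div L)) $ (j mod L)) $ i = vec (length fs * L) (\<lambda>j. B (fs ! (j div L)) $ (j mod L)) $ i"
    using assms \<open>i < length fs * L\<close> by simp
qed simp

lemma blkdiag_mult:
  assumes "\<And>m. m \<in> set fs \<Longrightarrow> A m \<in> carrier_mat L L" "\<And>m. m \<in> set fs \<Longrightarrow> B m \<in> carrier_mat L L"
  shows "blkdiag fs L A * blkdiag fs L B = blkdiag fs L (\<lambda>m. A m * B m)"
proof (rule eq_matI)
  fix a b assume ab: "a < dim_row (blkdiag fs L (\<lambda>m. A m * B m))" "b < dim_col (blkdiag fs L (\<lambda>m. A m * B m))"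
  let ?n = "length fs"
  have a: "a < ?n * L" and b: "b < ?n * L" using ab by auto
  note ai = blk_idx[OF a] and bi = blk_idx[OF b]
  let ?q = "a div L"
  have mem: "fs ! ?q \<in> set fs" using ai by simp
  have "(blkdiag fs L A * blkdiag fs L B) $$ (a,b) =
     (\<Sum>c\<in>{0..<?n*L}. blkdiag fs L A $$ (a,c) * blkdiag fs L B $$ (c,b))"
    using a b by (simp add: scalar_prod_def)
  also have "\<dots> = (\<Sum>c\<in>{0..<?n*L}. if c div L = ?q then
      A (fs ! ?q) $$ (a mod L, c mod L) * (if ?q = b div L then B (fs ! ?q) $$ (c mod L, b mod L) else 0) else 0)"
    using a b by (intro sum.cong) (auto simp: blkdiag_def)
  also have "\<dots> = (\<Sum>t<L. A (fs ! ?q) $$ (a mod L, t) * (if ?q = b div L then B (fs ! ?q) $$ (t, b mod L) else 0))"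
    using ai bi by (subst sum_block[OF ai(2)]) (auto intro!: sum.cong)
  also have "\<dots> = blkdiag fs L (\<lambda>m. A m * B m) $$ (a,b)"
    using a b ai bi assms[OF mem] by (auto simp: blkdiag_def scalar_prod_def atLeast0LessThan)
  finally show "(blkdiag fs L A * blkdiag fs L B) $$ (a,b) = blkdiag fs L (\<lambda>m. A m * B m) $$ (a,b)" .
qed auto

lemma blkdiag_mult_vec:
  assumes "\<And>m. m \<in> set fs \<Longrightarrow> A m \<in> carrier_mat L L" "\<And>m. m \<in> set fs \<Longrightarrow> v m \<in> carrier_vec L"
  shows "blkdiag fs L A *\<^sub>v stack fs L v = stack fs L (\<lambda>m. A m *\<^sub>v v m)"
proof (rule eq_vecI)
  fix a assume ab: "a < dim_vec (stack fs L (\<lambda>m. A m *\<^sub>v v m))"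
  let ?n = "length fs"
  have a: "a < ?n * L" using ab by auto
  note ai = blk_idx[OF a]
  let ?q = "a div L"
  have mem: "fs ! ?q \<in> set fs" using ai by simp
  have "(blkdiag fs L A *\<^sub>v stack fs L v) $ a =
     (\<Sum>c\<in>{0..<?n*L}. blkdiag fs L A $$ (a,c) * stack fs L v $ c)"
    using a by (simp add: scalar_prod_def)
  also have "\<dots> = (\<Sum>c\<in>{0..<?n*L}. if c div L = ?q then
      A (fs ! ?q) $$ (a mod L, c mod L) * v (fs ! ?q) $ (c mod L) else 0)"
    using a by (intro sum.cong) (auto simp: blkdiag_def stack_def)
  also have "\<dots> = (\<Sum>t<L. A (fs ! ?q) $$ (a mod L, t) * v (fs ! ?q) $ t)"
    using ai by (subst sum_block[OF ai(2)]) (auto intro!: sum.cong)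
  also have "\<dots> = stack fs L (\<lambda>m. A m *\<^sub>v v m) $ a"
    using a ai assms[OF mem] by (auto simp: stack_def scalar_prod_def atLeast0LessThan)
  finally show "(blkdiag fs L A *\<^sub>v stack fs L v) $ a = stack fs L (\<lambda>m. A m *\<^sub>v v m) $ a" .
qed auto




lemma blkdiag_ctrans: assumes "\<And>m. m \<in> set fs \<Longrightarrow> A m \<in> carrier_mat L L"
  shows "ctrans (blkdiag fs L A) = blkdiag fs L (\<lambda>m. ctrans (A m))"
proof (rule eq_matI)
  fix a b assume ab: "a < dim_row (blkdiag fs L (\<lambda>m. ctrans (A m)))" "b < dim_col (blkdiag fs L (\<lambda>m. ctrans (A m)))"
  then have a: "a < length fs * L" and b: "b < length fs * L" by auto
  note ai = blk_idx[OF a] and bi = blk_idx[OF b]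
  have m1: "fs ! (a div L) \<in> set fs" "fs ! (b div L) \<in> set fs" using ai bi by auto
  show "ctrans (blkdiag fs L A) $$ (a, b) = blkdiag fs L (\<lambda>m. ctrans (A m)) $$ (a, b)"
    using a b ai bi assms[OF m1(1)] assms[OF m1(2)] by (auto simp: blkdiag_def)
qed auto

lemma blkdiag_one: assumes "\<And>m. m \<in> set fs \<Longrightarrow> A m = 1\<^sub>m L"
  shows "blkdiag fs L A = 1\<^sub>m (length fs * L)"
proof -
  have "blkdiag fs L A = blkdiag fs L (\<lambda>m. 1\<^sub>m L)" by (rule blkdiag_cong) (simp add: assms)
  also have "\<dots> = 1\<^sub>m (length fs * L)"
  proof (rule eq_matI)
    fix a b assume "a < dim_row (1\<^sub>m (length fs * L))" "b < dim_col (1\<^sub>m (length fs * L))"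
    then have a: "a < length fs * L" and b: "b < length fs * L" by auto
    note ai = blk_idx[OF a] and bi = blk_idx[OF b]
    have "(a div L = b div L \<and> a mod L = b mod L) = (a = b)"
      by (metis div_mult_mod_eq)
    then show "blkdiag fs L (\<lambda>m. 1\<^sub>m L) $$ (a, b) = 1\<^sub>m (length fs * L) $$ (a, b)"
      using a b ai bi by (auto simp: blkdiag_def)
  qed auto
  finally show ?thesis .
qed

lemma adjoint_vec: assumes A: "A \<in> carrier_mat r c" and x: "x \<in> carrier_vec c" and y: "y \<in> carrier_vec r"
  shows "conjugate (A *\<^sub>v x) \<bullet> y = conjugate x \<bullet> (ctrans A *\<^sub>v y)"
proof -
  have "conjugate (A *\<^sub>v x) \<bullet> y = (\<Sum>i<r. \<Sum>j<c. cnj (A $$ (i,j)) * cnj (x $ j) * y $ i)"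
    using A x y by (auto simp: scalar_prod_def atLeast0LessThan sum_distrib_right cnj_sum intro!: sum.cong)
  also have "\<dots> = (\<Sum>j<c. \<Sum>i<r. cnj (A $$ (i,j)) * cnj (x $ j) * y $ i)" by (rule sum.swap)
  also have "\<dots> = conjugate x \<bullet> (ctrans A *\<^sub>v y)"
    using A x y by (auto simp: scalar_prod_def atLeast0LessThan sum_distrib_left intro!: sum.cong)
  finally show ?thesis .
qed




definition colm :: "complex vec \<Rightarrow> complex mat" where
  "colm w = mat (dim_vec w) 1 (\<lambda>(i,j). w $ i)"

lemma colm_carrier[simp]: "colm w \<in> carrier_mat (dim_vec w) 1"
  by (simp add: colm_def)

lemma outer_colm: "outer w = colm w * ctrans (colm w)"
  by (rule eq_matI) (auto simp: outer_def colm_def scalar_prod_def)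

lemma colm_mult: assumes "A \<in> carrier_mat r n" "v \<in> carrier_vec n"
  shows "colm (A *\<^sub>v v) = A * colm v"
  using assms by (intro eq_matI) (auto simp: colm_def scalar_prod_def)

lemma outer_mult: assumes A: "A \<in> carrier_mat r n" and v: "v \<in> carrier_vec n"
  shows "outer (A *\<^sub>v v) = A * outer v * ctrans A"
proof -
  have cv: "colm v \<in> carrier_mat n 1" using v colm_carrier[of v] by simp
  have "outer (A *\<^sub>v v) = (A * colm v) * ctrans (A * colm v)"
    unfolding outer_colm colm_mult[OF A v] ..
  also have "\<dots> = (A * colm v) * (ctrans (colm v) * ctrans A)"
    using A cv by (subst ctrans_mult) auto
  also have "\<dots> = A * (colm v * (ctrans (colm v) * ctrans A))"
    using A cv by (intro assoc_mult_mat[of _ r n _ 1 _ r]) auto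
  also have "colm v * (ctrans (colm v) * ctrans A) = (colm v * ctrans (colm v)) * ctrans A"
    using A cv by (intro assoc_mult_mat[symmetric, of _ n 1 _ n _ r]) auto
  also have "A * ((colm v * ctrans (colm v)) * ctrans A) = A * (colm v * ctrans (colm v)) * ctrans A"
    using A cv by (intro assoc_mult_mat[symmetric, of _ r n _ n _ r]) auto
  finally show ?thesis unfolding outer_colm .
qed

lemma msum_carrier[simp]: "msum r c f I \<in> carrier_mat r c"
  by (simp add: msum_def)

lemma msum_empty: "msum r c f {} = 0\<^sub>m r c"
  by (rule eq_matI) (auto simp: msum_def)

lemma msum_insert: assumes "finite F" "i \<notin> F" "f i \<in> carrier_mat r c"
  shows "msum r c f (insert i F) = f i + msum r c f F"
  using assms by (intro eq_matI) (auto simp: msum_def)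

lemma msum_congr:
  assumes "finite I" "\<And>i. i \<in> I \<Longrightarrow> X i \<in> carrier_mat n n" and E: "E \<in> carrier_mat m n" and D: "D \<in> carrier_mat n m'"
  shows "msum m m' (\<lambda>i. c i \<cdot>\<^sub>m (E * X i * D)) I = E * msum n n (\<lambda>i. c i \<cdot>\<^sub>m X i) I * D"
  using assms(1,2)
proof (induction I rule: finite_induct)
  case empty
  then show ?case using E D by (simp add: msum_empty)
next
  case (insert i F)
  have Xi: "X i \<in> carrier_mat n n" using insert by auto
  have IH: "msum m m' (\<lambda>i. c i \<cdot>\<^sub>m (E * X i * D)) F = E * msum n n (\<lambda>i. c i \<cdot>\<^sub>m X i) F * D"
    using insert by auto
  let ?S = "msum n n (\<lambda>i. c i \<cdot>\<^sub>m X i) F"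
  have S: "?S \<in> carrier_mat n n" by simp
  have "msum m m' (\<lambda>i. c i \<cdot>\<^sub>m (E * X i * D)) (insert i F) = c i \<cdot>\<^sub>m (E * X i * D) + E * ?S * D"
    using insert Xi E D by (subst msum_insert) (auto simp: IH)
  also have "c i \<cdot>\<^sub>m (E * X i * D) = E * (c i \<cdot>\<^sub>m X i) * D"
    using Xi E D by (simp add: mult_smult_distrib[OF E Xi] mult_smult_assoc_mat[of "E * X i" m n D m'])
  then have "c i \<cdot>\<^sub>m (E * X i * D) + E * ?S * D = E * (c i \<cdot>\<^sub>m X i) * D + E * ?S * D" by simp
  also have "\<dots> = (E * (c i \<cdot>\<^sub>m X i) + E * ?S) * D"
    using Xi E D S by (simp add: add_mult_distrib_mat[of _ m n])
  also have "\<dots> = E * (c i \<cdot>\<^sub>m X i + ?S) * D"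
    using Xi E D S by (subst mult_add_distrib_mat[of E m n]) auto
  also have "c i \<cdot>\<^sub>m X i + ?S = msum n n (\<lambda>i. c i \<cdot>\<^sub>m X i) (insert i F)"
    using insert Xi by (subst msum_insert) auto
  finally show ?case .
qed

lemma minv_inv: assumes A: "A \<in> carrier_mat n n" and B: "B \<in> carrier_mat n n"
  and AB: "A * B = 1\<^sub>m n" and BA: "B * A = 1\<^sub>m n"
  shows "minv A = B"
proof -
  have U: "A \<in> Units (ring_mat TYPE(complex) n undefined)"
    using A B AB BA by (auto simp: Units_def ring_mat_def)
  obtain C where C: "mat_inverse A = Some C"
    using mat_inverse(1)[OF A, where b=undefined] U by (cases "mat_inverse A") auto
  note CC = mat_inverse(2)[OF A C]
  have "C = C * (A * B)" using CC AB right_mult_one_mat[of C n n] by simp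
  also have "\<dots> = (C * A) * B" using CC A B by (metis assoc_mult_mat)
  also have "\<dots> = B" using CC B by simp
  finally show ?thesis using C by (simp add: minv_def)
qed

lemma minv_none: assumes A: "A \<in> carrier_mat n n"
  and no: "\<not> (\<exists>B \<in> carrier_mat n n. A * B = 1\<^sub>m n \<and> B * A = 1\<^sub>m n)"
  shows "minv A = 0\<^sub>m n n"
proof (cases "mat_inverse A")
  case None then show ?thesis using A by (simp add: minv_def)
next
  case (Some C)
  then show ?thesis using mat_inverse(2)[OF A Some] no by auto
qed




lemma assoc_n: fixes A B C :: "complex mat" shows "A \<in> carrier_mat n n \<Longrightarrow> B \<in> carrier_mat n n \<Longrightarrow> C \<in> carrier_mat n n \<Longrightarrow> A * B * C = A * (B * C)"
  by (rule assoc_mult_mat)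

lemma mult_n: fixes A B :: "complex mat" shows "A \<in> carrier_mat n n \<Longrightarrow> B \<in> carrier_mat n n \<Longrightarrow> A * B \<in> carrier_mat n n"
  by simp

lemma cancel_l: fixes A B Z :: "complex mat" shows "A * B = 1\<^sub>m n \<Longrightarrow> A \<in> carrier_mat n n \<Longrightarrow> B \<in> carrier_mat n n \<Longrightarrow> Z \<in> carrier_mat n n \<Longrightarrow> A * (B * Z) = Z"
proof -
  assume AB: "A * B = 1\<^sub>m n" and A: "A \<in> carrier_mat n n" and B: "B \<in> carrier_mat n n" and Z: "Z \<in> carrier_mat n n"
  have "A * (B * Z) = (A * B) * Z" by (rule assoc_mult_mat[OF A B Z, symmetric])
  also have "\<dots> = Z" unfolding AB using Z by simp
  finally show ?thesis .
qed

lemma zero_case: fixes v w :: "complex vec" shows "v \<in> carrier_vec n \<Longrightarrow> w \<in> carrier_vec n \<Longrightarrow> conjugate w \<bullet> (0\<^sub>m n n *\<^sub>v v) = 0"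
  by (simp add: scalar_prod_def)

lemma key_sinr:
  assumes C: "C \<in> carrier_mat n n" and D: "D \<in> carrier_mat n n" and Di: "Di \<in> carrier_mat n n"
    and DDi: "D * Di = 1\<^sub>m n" and DiD: "Di * D = 1\<^sub>m n" and g: "g \<in> carrier_vec n"
  shows "conjugate (ctrans D *\<^sub>v g) \<bullet> (minv (ctrans D * C * D) *\<^sub>v (ctrans D *\<^sub>v g))
       = conjugate g \<bullet> (minv C *\<^sub>v g)"
proof -
  define E where "E = ctrans D"
  define Ei where "Ei = ctrans Di"
  have E: "E \<in> carrier_mat n n" and Ei: "Ei \<in> carrier_mat n n" using D Di by (auto simp: E_def Ei_def)
  have EEi: "E * Ei = 1\<^sub>m n" unfolding E_def Ei_def using D Di DiD
    by (subst ctrans_mult[symmetric]) auto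
  have EiE: "Ei * E = 1\<^sub>m n" unfolding E_def Ei_def using D Di DDi
    by (subst ctrans_mult[symmetric]) auto
  define X where "X = E * C * D"
  have X: "X \<in> carrier_mat n n" using E C D by (simp add: X_def)
  show ?thesis
  proof (cases "\<exists>B \<in> carrier_mat n n. C * B = 1\<^sub>m n \<and> B * C = 1\<^sub>m n")
    case True
    then obtain B where B: "B \<in> carrier_mat n n" "C * B = 1\<^sub>m n" "B * C = 1\<^sub>m n" by blast
    have mC: "minv C = B" using minv_inv[OF C B] .
    define Y where "Y = Di * B * Ei"
    have Y: "Y \<in> carrier_mat n n" using Di B Ei by (simp add: Y_def)
    have XY: "X * Y = 1\<^sub>m n" unfolding X_def Y_def
      using E C D Di B Ei EEi by (simp add: assoc_n mult_n cancel_l[OF DDi D Di] cancel_l[OF B(2) C B(1)])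
    have YX: "Y * X = 1\<^sub>m n" unfolding X_def Y_def
      using E C D Di B Ei DiD by (simp add: assoc_n mult_n cancel_l[OF EiE Ei E] cancel_l[OF B(3) B(1) C])
    have mX: "minv X = Y" using minv_inv[OF X Y XY YX] .
    have Eg: "E *\<^sub>v g \<in> carrier_vec n" using E g by simp
    have Eg': "Ei *\<^sub>v (E *\<^sub>v g) \<in> carrier_vec n" using Ei Eg by simp
    have "Ei *\<^sub>v (E *\<^sub>v g) = (Ei * E) *\<^sub>v g" by (rule assoc_mult_mat_vec[OF Ei E g, symmetric])
    also have "\<dots> = g" unfolding EiE using g by simp
    finally have Eig: "Ei *\<^sub>v (E *\<^sub>v g) = g" .
    have "minv X *\<^sub>v (E *\<^sub>v g) = (Di * B) *\<^sub>v (Ei *\<^sub>v (E *\<^sub>v g))"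
      unfolding mX Y_def by (rule assoc_mult_mat_vec[of _ n n _ n]) (use Di B Ei Eg in auto)
    also have "\<dots> = Di *\<^sub>v (B *\<^sub>v (Ei *\<^sub>v (E *\<^sub>v g)))"
      using assoc_mult_mat_vec[OF Di B(1) Eg'] .
    also have "\<dots> = Di *\<^sub>v (B *\<^sub>v g)" by (simp only: Eig)
    finally have 1: "minv X *\<^sub>v (E *\<^sub>v g) = Di *\<^sub>v (B *\<^sub>v g)" .
    have "conjugate (E *\<^sub>v g) \<bullet> (Di *\<^sub>v (B *\<^sub>v g)) = conjugate g \<bullet> (ctrans E *\<^sub>v (Di *\<^sub>v (B *\<^sub>v g)))"
      using adjoint_vec[OF E g] Di B g by simp
    also have "ctrans E *\<^sub>v (Di *\<^sub>v (B *\<^sub>v g)) = (D * Di) *\<^sub>v (B *\<^sub>v g)"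
      unfolding E_def using D Di B g by simp
    also have "\<dots> = B *\<^sub>v g" using DDi B g by simp
    finally show ?thesis using 1 mC unfolding X_def E_def by simp
  next
    case False
    have "\<not> (\<exists>Y \<in> carrier_mat n n. X * Y = 1\<^sub>m n \<and> Y * X = 1\<^sub>m n)"
    proof
      assume "\<exists>Y \<in> carrier_mat n n. X * Y = 1\<^sub>m n \<and> Y * X = 1\<^sub>m n"
      then obtain Y where Y: "Y \<in> carrier_mat n n" "X * Y = 1\<^sub>m n" "Y * X = 1\<^sub>m n" by blast
      define B where "B = D * Y * E"
      have B: "B \<in> carrier_mat n n" using D Y E by (simp add: B_def)
      have CX: "C = Ei * X * Di"
      proof -
        show ?thesis unfolding X_def
          using E C D Di Ei DDi by (simp add: assoc_n mult_n cancel_l[OF EiE Ei E])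
      qed
      have "C * B = 1\<^sub>m n" unfolding CX B_def
        using E X D Di Ei Y EiE by (simp add: assoc_n mult_n cancel_l[OF DiD Di D] cancel_l[OF Y(2) X Y(1)])
      moreover have "B * C = 1\<^sub>m n" unfolding CX B_def
        using E X D Di Ei Y DDi by (simp add: assoc_n mult_n cancel_l[OF EEi E Ei] cancel_l[OF Y(3) Y(1) X])
      ultimately have "\<exists>B \<in> carrier_mat n n. C * B = 1\<^sub>m n \<and> B * C = 1\<^sub>m n" using B by (intro bexI[of _ B] conjI)
      with False show False by (rule notE)
    qed
    then have z1: "minv X = 0\<^sub>m n n" by (rule minv_none[OF X])
    have z2: "minv C = 0\<^sub>m n n" using False by (rule minv_none[OF C])
    have h1: "conjugate (E *\<^sub>v g) \<bullet> (minv X *\<^sub>v (E *\<^sub>v g)) = 0"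
      unfolding z1 by (rule zero_case) (use E g in simp_all)
    have h2: "conjugate g \<bullet> (minv C *\<^sub>v g) = 0"
      unfolding z2 by (rule zero_case) (use g in simp_all)
    show ?thesis using h1 h2 unfolding X_def E_def by (simp only:)
  qed
qed




lemma mult_mat_vec_0: fixes A :: "complex mat" shows "A *\<^sub>v 0\<^sub>v (dim_col A) = 0\<^sub>v (dim_row A)"
  by (intro eq_vecI) (auto simp: scalar_prod_def)

lemma msum_cong: "(\<And>i. i \<in> I \<Longrightarrow> f i = g i) \<Longrightarrow> msum r c f I = msum r c g I"
  unfolding msum_def by (intro eq_matI) auto

lemma set_serving: "set (serving M Us k) = {m. m < M \<and> k \<in> Us m}"
  unfolding serving_def by simp

lemma gstack_eq: "gstack M L Us W h k = stack (serving M Us k) L (\<lambda>m. geff W h m k)"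
  by (simp add: gstack_def stack_def Let_def)

lemma gbar_eq: "gbar M L Us W h k i = stack (serving M Us k) L (\<lambda>m. if i \<in> Us m then geff W h m i else 0\<^sub>v L)"
proof (rule eq_vecI)
  fix j assume "j < dim_vec (stack (serving M Us k) L (\<lambda>m. if i \<in> Us m then geff W h m i else 0\<^sub>v L))"
  then have j: "j < length (serving M Us k) * L" by simp
  then show "gbar M L Us W h k i $ j = stack (serving M Us k) L (\<lambda>m. if i \<in> Us m then geff W h m i else 0\<^sub>v L) $ j"
    using blk_idx(3)[OF j] by (simp add: gbar_def stack_def Let_def)
qed (simp add: gbar_def stack_def Let_def)

lemma sigma_k_eq: "sigma_k M K L Us W R p \<sigma>2 k = blkdiag (serving M Us k) L (sigblk K L Us W R p \<sigma>2)"
  by (simp add: sigma_k_def blkdiag_def Let_def)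

lemma sigblk_carrier: assumes d: "dim_col (W m) = L" shows "sigblk K L Us W R p \<sigma>2 m \<in> carrier_mat L L"
proof -
  have 2: "ctrans (W m) * W m \<in> carrier_mat L L" using d by auto
  show ?thesis unfolding sigblk_def d
    using 2 by simp
qed

context
  fixes M K N L :: nat and Us :: "nat \<Rightarrow> nat set" and h :: "nat \<Rightarrow> nat \<Rightarrow> complex vec"
    and R :: "nat \<Rightarrow> nat \<Rightarrow> complex mat" and p :: "nat \<Rightarrow> real" and \<sigma>2 :: real
    and U Q :: "nat \<Rightarrow> complex mat" and k :: nat
  assumes Ucar: "\<And>m. m < M \<Longrightarrow> U m \<in> carrier_mat N L"
    and Qcar: "\<And>m. m < M \<Longrightarrow> Q m \<in> carrier_mat L L"
    and hcar: "\<And>m i. m < M \<Longrightarrow> i < K \<Longrightarrow> h m i \<in> carrier_vec N"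
    and Rcar: "\<And>m i. m < M \<Longrightarrow> i < K \<Longrightarrow> R m i \<in> carrier_mat N N"
begin

lemma geff_UQ: assumes "m < M" "i < K"
  shows "geff (\<lambda>m. U m * Q m) h m i = ctrans (Q m) *\<^sub>v geff U h m i"
proof -
  have U: "U m \<in> carrier_mat N L" and Qm: "Q m \<in> carrier_mat L L" and hm: "h m i \<in> carrier_vec N"
    using Ucar Qcar hcar assms by auto
  have "geff (\<lambda>m. U m * Q m) h m i = (ctrans (Q m) * ctrans (U m)) *\<^sub>v h m i"
    unfolding geff_def using U Qm by (subst ctrans_mult) auto
  also have "\<dots> = ctrans (Q m) *\<^sub>v (ctrans (U m) *\<^sub>v h m i)"
    by (rule assoc_mult_mat_vec) (use U Qm hm in auto)
  finally show ?thesis unfolding geff_def .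
qed

lemma geff_car: "m < M \<Longrightarrow> i < K \<Longrightarrow> geff U h m i \<in> carrier_vec L"
  unfolding geff_def using Ucar hcar by (intro mult_mat_vec_carrier[of _ L N]) auto

lemma sigblk_UQ: assumes m: "m < M"
  shows "sigblk K L Us (\<lambda>m. U m * Q m) R p \<sigma>2 m = ctrans (Q m) * sigblk K L Us U R p \<sigma>2 m * Q m"
proof -
  have U: "U m \<in> carrier_mat N L" and Qm: "Q m \<in> carrier_mat L L"
    using Ucar Qcar m by auto
  let ?Qh = "ctrans (Q m)" and ?Uh = "ctrans (U m)"
  have Qh: "?Qh \<in> carrier_mat L L" using Qm by simp
  have Uh: "?Uh \<in> carrier_mat L N" using U by simp
  have cUQ: "ctrans (U m * Q m) = ?Qh * ?Uh" using U Qm by (subst ctrans_mult) auto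
  have dc: "dim_col (U m * Q m) = L" "dim_col (U m) = L" using U Qm by auto
  let ?S = "{i. i < K \<and> i \<notin> Us m}"
  have fin: "finite ?S" by simp
  have X: "?Uh * R m i * U m \<in> carrier_mat L L" if "i \<in> ?S" for i
  proof -
    have "R m i \<in> carrier_mat N N" using Rcar[OF m] that by auto
    then show ?thesis by (rule mult_carrier_mat[OF mult_carrier_mat[OF Uh] U])
  qed
  have sand: "\<And>X. X \<in> carrier_mat N N \<Longrightarrow> ctrans (U m * Q m) * X * (U m * Q m) = ?Qh * (?Uh * X * U m) * Q m"
  proof -
    fix X :: "complex mat" assume X: "X \<in> carrier_mat N N"
    have "ctrans (U m * Q m) * X * (U m * Q m) = ((?Qh * ?Uh) * X) * (U m * Q m)" unfolding cUQ ..
    also have "\<dots> = (?Qh * (?Uh * X)) * (U m * Q m)"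
      using Qh Uh X by (subst assoc_mult_mat[of _ L L _ N _ N]) auto
    also have "\<dots> = ?Qh * ((?Uh * X) * (U m * Q m))"
      using Qh Uh X U Qm by (intro assoc_mult_mat[of _ L L _ N _ L]) auto
    also have "(?Uh * X) * (U m * Q m) = ((?Uh * X) * U m) * Q m"
      using Uh X U Qm by (intro assoc_mult_mat[symmetric, of _ L N _ L _ L]) auto
    also have "?Qh * (((?Uh * X) * U m) * Q m) = ?Qh * (?Uh * X * U m) * Q m"
      using Uh X U Qm Qh by (intro assoc_mult_mat[symmetric, of _ L L _ L _ L]) auto
    finally show "ctrans (U m * Q m) * X * (U m * Q m) = ?Qh * (?Uh * X * U m) * Q m" .
  qed
  have "msum L L (\<lambda>i. complex_of_real (p i) \<cdot>\<^sub>m (ctrans (U m * Q m) * R m i * (U m * Q m))) ?S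
      = msum L L (\<lambda>i. complex_of_real (p i) \<cdot>\<^sub>m (?Qh * (?Uh * R m i * U m) * Q m)) ?S"
    by (rule msum_cong) (use sand Rcar[OF m] in auto)
  also have "\<dots> = ?Qh * msum L L (\<lambda>i. complex_of_real (p i) \<cdot>\<^sub>m (?Uh * R m i * U m)) ?S * Q m"
    by (rule msum_congr[OF fin X Qh Qm])
  finally have 1: "msum L L (\<lambda>i. complex_of_real (p i) \<cdot>\<^sub>m (ctrans (U m * Q m) * R m i * (U m * Q m))) ?S
     = ?Qh * msum L L (\<lambda>i. complex_of_real (p i) \<cdot>\<^sub>m (?Uh * R m i * U m)) ?S * Q m" .
  have UU: "?Uh * U m \<in> carrier_mat L L" by (rule mult_carrier_mat[OF Uh U])
  have "complex_of_real \<sigma>2 \<cdot>\<^sub>m (ctrans (U m * Q m) * (U m * Q m)) = complex_of_real \<sigma>2 \<cdot>\<^sub>m (?Qh * (?Uh * U m) * Q m)"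
  proof -
    have cc: "ctrans (U m * Q m) \<in> carrier_mat L N" using U Qm by auto
    have "ctrans (U m * Q m) * (U m * Q m) = ctrans (U m * Q m) * 1\<^sub>m N * (U m * Q m)"
      by (simp only: right_mult_one_mat[OF cc])
    also have "\<dots> = ?Qh * (?Uh * 1\<^sub>m N * U m) * Q m" by (rule sand) simp
    finally show ?thesis using right_mult_one_mat[OF Uh] by simp
  qed
  also have "\<dots> = ?Qh * (complex_of_real \<sigma>2 \<cdot>\<^sub>m (?Uh * U m)) * Q m"
    using Qh UU Qm by (simp add: mult_smult_distrib[OF Qh UU] mult_smult_assoc_mat[OF mult_carrier_mat[OF Qh UU] Qm])
  finally have 2: "complex_of_real \<sigma>2 \<cdot>\<^sub>m (ctrans (U m * Q m) * (U m * Q m)) = ?Qh * (complex_of_real \<sigma>2 \<cdot>\<^sub>m (?Uh * U m)) * Q m" .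
  let ?A = "msum L L (\<lambda>i. complex_of_real (p i) \<cdot>\<^sub>m (?Uh * R m i * U m)) ?S"
  let ?B = "complex_of_real \<sigma>2 \<cdot>\<^sub>m (?Uh * U m)"
  have A: "?A \<in> carrier_mat L L" by simp
  have B: "?B \<in> carrier_mat L L" using UU by simp
  have "sigblk K L Us (\<lambda>m. U m * Q m) R p \<sigma>2 m = ?Qh * ?A * Q m + ?Qh * ?B * Q m"
    unfolding sigblk_def dc 1 2 ..
  also have "\<dots> = (?Qh * ?A + ?Qh * ?B) * Q m"
    using mult_carrier_mat[OF Qh A] mult_carrier_mat[OF Qh B] Qm by (subst add_mult_distrib_mat[of _ L L]) auto
  also have "?Qh * ?A + ?Qh * ?B = ?Qh * (?A + ?B)"
    using Qh A B by (subst mult_add_distrib_mat[of _ L L]) auto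
  finally show ?thesis unfolding sigblk_def dc .
qed

end




lemma outer_carrier: "outer v \<in> carrier_mat (dim_vec v) (dim_vec v)"
  by (simp add: outer_def)

lemma inv_exists: assumes Qm: "Q \<in> carrier_mat L L" and inv: "invertible_mat Q"
  shows "\<exists>B. B \<in> carrier_mat L L \<and> Q * B = 1\<^sub>m L \<and> B * Q = 1\<^sub>m L"
proof -
  obtain B where e1: "Q * B = 1\<^sub>m (dim_row Q)" and e2: "B * Q = 1\<^sub>m (dim_row B)"
    using inv unfolding invertible_mat_def inverts_mat_def by blast
  have r: "dim_row Q = L" "dim_col Q = L" using Qm by auto
  have c1: "dim_col B = L" using arg_cong[OF e1, of dim_col] r by simp
  have c2: "dim_row B = L" using arg_cong[OF e2, of dim_col] r by simp
  have Bc: "B \<in> carrier_mat L L" by (rule carrier_matI[OF c2 c1])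
  show ?thesis using e1 e2 Bc r by (intro exI[of _ B]) simp
qed

context
  fixes M K N L :: nat and Us :: "nat \<Rightarrow> nat set" and h :: "nat \<Rightarrow> nat \<Rightarrow> complex vec"
    and R :: "nat \<Rightarrow> nat \<Rightarrow> complex mat" and p :: "nat \<Rightarrow> real" and \<sigma>2 :: real
    and U Q :: "nat \<Rightarrow> complex mat" and k :: nat
  assumes Ucar: "\<And>m. m < M \<Longrightarrow> U m \<in> carrier_mat N L"
    and Qcar: "\<And>m. m < M \<Longrightarrow> Q m \<in> carrier_mat L L"
    and hcar: "\<And>m i. m < M \<Longrightarrow> i < K \<Longrightarrow> h m i \<in> carrier_vec N"
    and Rcar: "\<And>m i. m < M \<Longrightarrow> i < K \<Longrightarrow> R m i \<in> carrier_mat N N"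
    and Qinv: "\<And>m. m < M \<Longrightarrow> invertible_mat (Q m)"
    and kK: "k < K"
begin

lemma sinr_inv: "SINR M K L Us h R p \<sigma>2 (\<lambda>m. U m * Q m) k = SINR M K L Us h R p \<sigma>2 U k"
proof -
  have geffQ: "geff (\<lambda>m. U m * Q m) h m i = ctrans (Q m) *\<^sub>v geff U h m i" if "m < M" "i < K" for m i
    by (rule geff_UQ[where U=U and Q=Q and h=h and R=R and M=M and K=K and N=N and L=L]) (simp_all add: Ucar Qcar hcar Rcar that)
  have geffC: "geff U h m i \<in> carrier_vec L" if "m < M" "i < K" for m i
    by (rule geff_car[where U=U and Q=Q and h=h and R=R and M=M and K=K and N=N and L=L]) (simp_all add: Ucar Qcar hcar Rcar that)
  have sigQ: "sigblk K L Us (\<lambda>m. U m * Q m) R p \<sigma>2 m = ctrans (Q m) * sigblk K L Us U R p \<sigma>2 m * Q m" if "m < M" for m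
    by (rule sigblk_UQ[where U=U and Q=Q and h=h and R=R and M=M and K=K and N=N and L=L]) (simp_all add: Ucar Qcar hcar Rcar that)
  define W where "W = (\<lambda>m. U m * Q m)"
  define fs where "fs = serving M Us k"
  have fsM: "\<And>m. m \<in> set fs \<Longrightarrow> m < M" by (simp add: fs_def set_serving)
  define n where "n = length fs * L"
  define Qh where "Qh = (\<lambda>m. ctrans (Q m))"
  have "\<forall>m. \<exists>B. m < M \<longrightarrow> B \<in> carrier_mat L L \<and> Q m * B = 1\<^sub>m L \<and> B * Q m = 1\<^sub>m L"
    using inv_exists[OF Qcar Qinv] by blast
  then obtain Qi where Qi: "\<forall>m. m < M \<longrightarrow> Qi m \<in> carrier_mat L L \<and> Q m * Qi m = 1\<^sub>m L \<and> Qi m * Q m = 1\<^sub>m L"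
    using choice[of "\<lambda>m B. m < M \<longrightarrow> B \<in> carrier_mat L L \<and> Q m * B = 1\<^sub>m L \<and> B * Q m = 1\<^sub>m L"] by blast
  have Qf: "\<And>m. m \<in> set fs \<Longrightarrow> Q m \<in> carrier_mat L L" using Qcar fsM by blast
  have Qhf: "\<And>m. m \<in> set fs \<Longrightarrow> Qh m \<in> carrier_mat L L" using Qf by (simp add: Qh_def)
  have Qif: "\<And>m. m \<in> set fs \<Longrightarrow> Qi m \<in> carrier_mat L L" using Qi fsM by blast
  define E where "E = blkdiag fs L Qh"
  define D where "D = blkdiag fs L Q"
  define Di where "Di = blkdiag fs L Qi"
  have Ec: "E \<in> carrier_mat n n" and Dc: "D \<in> carrier_mat n n" and Dic: "Di \<in> carrier_mat n n"
    by (simp_all add: E_def D_def Di_def n_def)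
  have "D * Di = blkdiag fs L (\<lambda>m. Q m * Qi m)" unfolding D_def Di_def
    by (rule blkdiag_mult) (use Qf Qif in auto)
  also have "\<dots> = 1\<^sub>m n" unfolding n_def by (rule blkdiag_one) (use Qi fsM in blast)
  finally have DDi: "D * Di = 1\<^sub>m n" .
  have "Di * D = blkdiag fs L (\<lambda>m. Qi m * Q m)" unfolding D_def Di_def
    by (rule blkdiag_mult) (use Qf Qif in auto)
  also have "\<dots> = 1\<^sub>m n" unfolding n_def by (rule blkdiag_one) (use Qi fsM in blast)
  finally have DiD: "Di * D = 1\<^sub>m n" .
  have ED: "ctrans D = E" unfolding D_def E_def Qh_def by (rule blkdiag_ctrans) (simp add: Qf)
  have DE: "ctrans E = D" unfolding ED[symmetric] by simp
  define gU where "gU = gstack M L Us U h k"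
  have gU: "gU = stack fs L (\<lambda>m. geff U h m k)" unfolding gU_def fs_def by (rule gstack_eq)
  have gUc: "gU \<in> carrier_vec n" unfolding gU n_def by simp
  have gW: "gstack M L Us W h k = E *\<^sub>v gU"
  proof -
    have "gstack M L Us W h k = stack fs L (\<lambda>m. Qh m *\<^sub>v geff U h m k)"
      unfolding gstack_eq fs_def[symmetric] W_def Qh_def
      by (rule stack_cong) (simp add: geffQ fsM kK)
    also have "\<dots> = E *\<^sub>v gU" unfolding E_def gU
      by (rule blkdiag_mult_vec[symmetric]) (simp_all add: Qhf geffC fsM kK)
    finally show ?thesis .
  qed
  define gbU where "gbU = (\<lambda>i. gbar M L Us U h k i)"
  have gbUc: "\<And>i. gbU i \<in> carrier_vec n" unfolding gbU_def gbar_eq fs_def[symmetric] n_def by simp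
  have gbW: "gbar M L Us W h k i = E *\<^sub>v gbU i" if i: "i < K" for i
  proof -
    have "gbar M L Us W h k i = stack fs L (\<lambda>m. Qh m *\<^sub>v (if i \<in> Us m then geff U h m i else 0\<^sub>v L))"
      unfolding gbar_eq fs_def[symmetric]
    proof (rule stack_cong)
      fix m assume m: "m \<in> set fs"
      have QhL: "dim_col (Qh m) = L" "dim_row (Qh m) = L" using Qhf[OF m] by auto
      show "(if i \<in> Us m then geff W h m i else 0\<^sub>v L) = Qh m *\<^sub>v (if i \<in> Us m then geff U h m i else 0\<^sub>v L)"
        using geffQ[OF fsM[OF m] i] mult_mat_vec_0[of "Qh m"] QhL unfolding W_def Qh_def by auto
    qed
    also have "\<dots> = E *\<^sub>v gbU i" unfolding E_def gbU_def gbar_eq fs_def[symmetric]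
      by (rule blkdiag_mult_vec[symmetric]) (simp_all add: Qhf geffC fsM i)
    finally show ?thesis .
  qed
  define S where "S = sigblk K L Us U R p \<sigma>2"
  have Sf: "\<And>m. m \<in> set fs \<Longrightarrow> S m \<in> carrier_mat L L"
    unfolding S_def by (rule sigblk_carrier) (use Ucar fsM in auto)
  define Sig where "Sig = sigma_k M K L Us U R p \<sigma>2 k"
  have Sigc: "Sig \<in> carrier_mat n n" unfolding Sig_def sigma_k_eq fs_def[symmetric] n_def by simp
  have SigW: "sigma_k M K L Us W R p \<sigma>2 k = E * Sig * D"
  proof -
    have "sigma_k M K L Us W R p \<sigma>2 k = blkdiag fs L (\<lambda>m. Qh m * S m * Q m)"
      unfolding sigma_k_eq fs_def[symmetric] W_def
      by (rule blkdiag_cong) (use sigQ fsM in \<open>auto simp: S_def Qh_def\<close>)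
    also have "\<dots> = blkdiag fs L (\<lambda>m. Qh m * S m) * D"
      unfolding D_def by (rule blkdiag_mult[symmetric]) (auto intro!: mult_carrier_mat[of _ L L _ L] Qhf Sf Qf)
    also have "blkdiag fs L (\<lambda>m. Qh m * S m) = E * Sig"
      unfolding E_def Sig_def sigma_k_eq fs_def[symmetric] S_def[symmetric]
      by (rule blkdiag_mult[symmetric]) (use Qhf Sf in auto)
    finally show ?thesis .
  qed
  define I where "I = {i. i < K \<and> i \<noteq> k}"
  have finI: "finite I" unfolding I_def by simp
  define P where "P = msum n n (\<lambda>i. complex_of_real (p i) \<cdot>\<^sub>m outer (gbU i)) I"
  have Pc: "P \<in> carrier_mat n n" unfolding P_def by simp
  have PW: "msum n n (\<lambda>i. complex_of_real (p i) \<cdot>\<^sub>m outer (gbar M L Us W h k i)) I = E * P * D"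
  proof -
    have "msum n n (\<lambda>i. complex_of_real (p i) \<cdot>\<^sub>m outer (gbar M L Us W h k i)) I
        = msum n n (\<lambda>i. complex_of_real (p i) \<cdot>\<^sub>m (E * outer (gbU i) * D)) I"
    proof (rule msum_cong)
      fix i assume "i \<in> I"
      then have i: "i < K" by (simp add: I_def)
      show "complex_of_real (p i) \<cdot>\<^sub>m outer (gbar M L Us W h k i) = complex_of_real (p i) \<cdot>\<^sub>m (E * outer (gbU i) * D)"
        unfolding gbW[OF i] outer_mult[OF Ec gbUc] DE ..
    qed
    also have "\<dots> = E * P * D" unfolding P_def
      by (rule msum_congr[OF finI _ Ec Dc]) (use outer_carrier gbUc in \<open>metis carrier_vecD\<close>)
    finally show ?thesis .
  qed
  define CU where "CU = P + Sig"
  have CUc: "CU \<in> carrier_mat n n" unfolding CU_def using Pc Sigc by simp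
  have CW: "E * P * D + E * Sig * D = E * CU * D"
  proof -
    have "E * P * D + E * Sig * D = (E * P + E * Sig) * D"
      using mult_carrier_mat[OF Ec Pc] mult_carrier_mat[OF Ec Sigc] Dc by (subst add_mult_distrib_mat[of _ n n]) auto
    also have "E * P + E * Sig = E * CU"
      unfolding CU_def using Ec Pc Sigc by (subst mult_add_distrib_mat[of _ n n]) auto
    finally show ?thesis .
  qed
  have dEg: "dim_vec (E *\<^sub>v gU) = n" using Ec by simp
  have dgU: "dim_vec gU = n" using gUc by simp
  have "SINR M K L Us h R p \<sigma>2 W k = conjugate (ctrans D *\<^sub>v gU) \<bullet> (minv (ctrans D * CU * D) *\<^sub>v (ctrans D *\<^sub>v gU))"
    unfolding SINR_def Let_def gW dEg PW[unfolded I_def] SigW CW ED ..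
  also have "\<dots> = conjugate gU \<bullet> (minv CU *\<^sub>v gU)"
    by (rule key_sinr[OF CUc Dc Dic DDi DiD gUc])
  also have "\<dots> = SINR M K L Us h R p \<sigma>2 U k"
    unfolding SINR_def Let_def gU_def[symmetric] dgU CU_def P_def gbU_def I_def Sig_def ..
  finally show ?thesis unfolding W_def .
qed

end

lemma fcr: assumes U: "U \<in> carrier_mat N L" and UU: "ctrans U * U = 1\<^sub>m L"
  and Q: "Q \<in> carrier_mat L L" and inv: "invertible_mat Q"
  shows "full_col_rank (U * Q)"
  unfolding full_col_rank_def
proof (intro ballI impI)
  fix v assume v': "v \<in> carrier_vec (dim_col (U * Q))" and z: "U * Q *\<^sub>v v = 0\<^sub>v (dim_row (U * Q))"
  have v: "v \<in> carrier_vec L" using v' Q by simp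
  have z': "U *\<^sub>v (Q *\<^sub>v v) = 0\<^sub>v N" using z assoc_mult_mat_vec[OF U Q v] U by simp
  have Qv: "Q *\<^sub>v v \<in> carrier_vec L" using Q v by simp
  have Uh: "ctrans U \<in> carrier_mat L N" using U by simp
  have "Q *\<^sub>v v = (ctrans U * U) *\<^sub>v (Q *\<^sub>v v)" unfolding UU using Qv by simp
  also have "\<dots> = ctrans U *\<^sub>v (U *\<^sub>v (Q *\<^sub>v v))" by (rule assoc_mult_mat_vec[OF Uh U Qv])
  also have "\<dots> = 0\<^sub>v L" unfolding z' using mult_mat_vec_0[of "ctrans U"] U by simp
  finally have Qv0: "Q *\<^sub>v v = 0\<^sub>v L" .
  obtain B where B: "B \<in> carrier_mat L L" "Q * B = 1\<^sub>m L" "B * Q = 1\<^sub>m L" using inv_exists[OF Q inv] by blast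
  have "v = (B * Q) *\<^sub>v v" unfolding B(3) using v by simp
  also have "\<dots> = B *\<^sub>v (Q *\<^sub>v v)" by (rule assoc_mult_mat_vec[OF B(1) Q v])
  also have "\<dots> = 0\<^sub>v L" unfolding Qv0 using mult_mat_vec_0[of B] B(1) by simp
  finally show "v = 0\<^sub>v (dim_col (U * Q))" using Q by simp
qed


theorem proposition1:
  fixes M K N L :: nat
    and Us :: "nat \<Rightarrow> nat set"
    and h :: "nat \<Rightarrow> nat \<Rightarrow> complex vec"
    and R :: "nat \<Rightarrow> nat \<Rightarrow> complex mat"
    and p :: "nat \<Rightarrow> real" and \<sigma>2 :: real
    and U Q :: "nat \<Rightarrow> complex mat"
    and k :: nat
  assumes "L \<le> N"
    and "\<And>i. i < K \<Longrightarrow> p i > 0"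
    and "\<sigma>2 > 0"
    and "\<And>m. m < M \<Longrightarrow> Us m \<subseteq> {..<K}"
    and "\<And>m i. m < M \<Longrightarrow> i < K \<Longrightarrow> h m i \<in> carrier_vec N"
    and "\<And>m i. m < M \<Longrightarrow> i < K \<Longrightarrow> herm_psd N (R m i)"
    and "\<And>m. m < M \<Longrightarrow> U m \<in> carrier_mat N L \<and> ctrans (U m) * U m = 1\<^sub>m L"
    and "\<And>m. m < M \<Longrightarrow> Q m \<in> carrier_mat L L \<and> invertible_mat (Q m)"
    and "k < K"
  shows "(\<forall>m < M. full_col_rank (U m * Q m))
    \<and> SINR M K L Us h R p \<sigma>2 (\<lambda>m. U m * Q m) k = SINR M K L Us h R p \<sigma>2 U k
    \<and> (\<forall>Q'. (\<forall>m < M. Q' m \<in> carrier_mat L L \<and> invertible_mat (Q' m)) \<longrightarrow>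
         Re (SINR M K L Us h R p \<sigma>2 (\<lambda>m. U m * Q' m) k)
           \<le> Re (SINR M K L Us h R p \<sigma>2 (\<lambda>m. U m * Q m) k))"
proof -
  have Ucar: "\<And>m. m < M \<Longrightarrow> U m \<in> carrier_mat N L" using assms(7) by blast
  have UU: "\<And>m. m < M \<Longrightarrow> ctrans (U m) * U m = 1\<^sub>m L" using assms(7) by blast
  have Qcar: "\<And>m. m < M \<Longrightarrow> Q m \<in> carrier_mat L L" using assms(8) by blast
  have Qinv: "\<And>m. m < M \<Longrightarrow> invertible_mat (Q m)" using assms(8) by blast
  have hcar: "\<And>m i. m < M \<Longrightarrow> i < K \<Longrightarrow> h m i \<in> carrier_vec N" by (rule assms(5))
  have Rcar: "\<And>m i. m < M \<Longrightarrow> i < K \<Longrightarrow> R m i \<in> carrier_mat N N"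
    using assms(6) unfolding herm_psd_def by blast
  have inv: "SINR M K L Us h R p \<sigma>2 (\<lambda>m. U m * Q' m) k = SINR M K L Us h R p \<sigma>2 U k"
    if Q': "\<forall>m < M. Q' m \<in> carrier_mat L L \<and> invertible_mat (Q' m)" for Q'
    by (rule sinr_inv[where U=U and Q=Q' and h=h and R=R and M=M and K=K and N=N and L=L])
       (simp_all add: Ucar hcar Rcar Q' assms(9))
  have 1: "\<forall>m < M. full_col_rank (U m * Q m)"
    using fcr Ucar UU Qcar Qinv by blast
  have Qall: "\<forall>m < M. Q m \<in> carrier_mat L L \<and> invertible_mat (Q m)" using Qcar Qinv by blast
  show ?thesis using 1 inv[OF Qall] inv by simp
qed

end
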